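(* Let $G$ be a cycle on $n_2\geq 3$ vertices. Then the graph $G^{\dagger}$ (for any choice of pairing in its construction) is neutral.
   Context: All graphs are finite and simple. A leaf is a vertex of degree one. The leaf-connecting operation on a graph $G$ produces $G^{\dagger}$ as follows: (1) for each vertex $v$ of $G$, attach $d_v$ new pendant vertices (leaves) to $v$; (2) repeatedly join a pair of leaves by an edge until no leaf is left (so the new pendant vertices are paired up by a perfect matching). For a graph $G=(V,E)$ with $m=|E|\geq1$ and degrees $d_u$, the assortativity coefficient is $$r(G)=\frac{m^{-1}\sum_{e_{uv}\in E} d_{u}d_{v}-\Big[m^{-1}\sum_{e_{uv}\in E} \tfrac{1}{2}(d_{u}+d_{v})\Big]^{2}}{m^{-1}\sum_{e_{uv}\in E} \tfrac{1}{2}(d^{2}_{u}+d^{2}_{v})-\Big[m^{-1}\sum_{e_{uv}\in E} \tfrac{1}{2}(d_{u}+d_{v})\Big]^{2}},$$ sums over edges counting each edge once, defined whenever the denominator is nonzero; $G$ is neutral if $r(G)$ is defined and equals $0$. *)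

theory Defs
  imports Complex_Main
begin

definition simple_graph :: "'a set \<Rightarrow> 'a set set \<Rightarrow> bool" where
  "simple_graph V E \<longleftrightarrow> finite V \<and> (\<forall>e\<in>E. e \<subseteq> V \<and> card e = 2)"

definition degree :: "'a set set \<Rightarrow> 'a \<Rightarrow> nat" where
  "degree E v = card {e \<in> E. v \<in> e}"

definition is_cycle :: "'a set \<Rightarrow> 'a set set \<Rightarrow> nat \<Rightarrow> bool" where
  "is_cycle V E n \<longleftrightarrow> simple_graph V E \<and> card V = n \<and>
     (\<exists>f. bij_betw f {0..<n} V \<and> E = {{f i, f ((i + 1) mod n)} | i. i < n})"

definition new_leaves :: "'a set \<Rightarrow> 'a set set \<Rightarrow> ('a + 'a \<times> nat) set" where
  "new_leaves V E = {Inr (v, i) | v i. v \<in> V \<and> i < degree E v}"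

definition perfect_matching :: "'b set \<Rightarrow> 'b set set \<Rightarrow> bool" where
  "perfect_matching L M \<longleftrightarrow> (\<forall>e\<in>M. e \<subseteq> L \<and> card e = 2) \<and> (\<forall>x\<in>L. \<exists>!e. e \<in> M \<and> x \<in> e)"

definition dagger_vertices :: "'a set \<Rightarrow> 'a set set \<Rightarrow> ('a + 'a \<times> nat) set" where
  "dagger_vertices V E = Inl ` V \<union> new_leaves V E"

definition dagger_edges ::
  "'a set \<Rightarrow> 'a set set \<Rightarrow> ('a + 'a \<times> nat) set set \<Rightarrow> ('a + 'a \<times> nat) set set" where
  "dagger_edges V E M =
     (\<lambda>e. Inl ` e) ` E \<union> {{Inl v, Inr (v, i)} | v i. v \<in> V \<and> i < degree E v} \<union> M"

text \<open>Assortativity coefficient; for an edge e = {u,v}: d_u d_v = prod over e,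
  d_u + d_v = sum over e, d_u^2 + d_v^2 = sum of squares over e.\<close>
definition assort_num :: "'b set set \<Rightarrow> real" where
  "assort_num E = (let m = real (card E);
      A = (\<Sum>e\<in>E. \<Prod>x\<in>e. real (degree E x)) / m;
      B = (\<Sum>e\<in>E. (1/2) * (\<Sum>x\<in>e. real (degree E x))) / m
    in A - B^2)"

definition assort_den :: "'b set set \<Rightarrow> real" where
  "assort_den E = (let m = real (card E);
      C = (\<Sum>e\<in>E. (1/2) * (\<Sum>x\<in>e. (real (degree E x))^2)) / m;
      B = (\<Sum>e\<in>E. (1/2) * (\<Sum>x\<in>e. real (degree E x))) / m
    in C - B^2)"

definition assortativity :: "'b set set \<Rightarrow> real" where
  "assortativity E = assort_num E / assort_den E"

definition neutral :: "'b set set \<Rightarrow> bool" where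
  "neutral E \<longleftrightarrow> card E \<ge> 1 \<and> assort_den E \<noteq> 0 \<and> assortativity E = 0"

end

theory Submission
  imports Defs
begin

lemma succ_mod: fixes x n :: nat assumes "x < n" shows "(x+1) mod n = (if x + 1 = n then 0 else x + 1)"
  using assms by (cases "x + 1 = n") auto

lemma modfacts:
  fixes k i n :: nat assumes "n \<ge> 3" "k < n" "i < n"
  shows "(k+n-1) mod n < n" "((k+n-1) mod n + 1) mod n = k" "(k+1) mod n \<noteq> (k+n-1) mod n"
    "(k+1) mod n \<noteq> k" "(k+n-1) mod n \<noteq> k" "(i+1) mod n = k \<Longrightarrow> i = (k+n-1) mod n"
proof -
  have p: "(k+n-1) mod n = (if k = 0 then n - 1 else k - 1)"
  proof (cases "k = 0")
    case True then show ?thesis using assms by simp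
  next
    case False
    then have e: "k+n-1 = (k-1) + n" by simp
    have "(k+n-1) mod n = ((k-1)+n) mod n" by (simp only: e)
    also have "\<dots> = k - 1" using assms by (simp only: mod_add_self2) simp
    finally show ?thesis using False by simp
  qed
  have q: "(k+1) mod n = (if k + 1 = n then 0 else k + 1)" using assms by (intro succ_mod)
  have r: "(i+1) mod n = (if i + 1 = n then 0 else i + 1)" using assms by (intro succ_mod)
  have pp: "((k+n-1) mod n + 1) mod n = (if (k+n-1) mod n + 1 = n then 0 else (k+n-1) mod n + 1)"
    using assms by (intro succ_mod) simp
  show "(k+n-1) mod n < n" using assms by simp
  show "((k+n-1) mod n + 1) mod n = k" unfolding pp p using assms by auto
  show "(k+1) mod n \<noteq> (k+n-1) mod n" unfolding p q using assms by auto
  show "(k+1) mod n \<noteq> k" unfolding q using assms by auto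
  show "(k+n-1) mod n \<noteq> k" unfolding p using assms by auto
  show "(i+1) mod n = k \<Longrightarrow> i = (k+n-1) mod n" unfolding p r using assms by (auto split: if_splits)
qed

lemma cycle_deg:
  assumes n3: "n \<ge> 3" and cyc: "is_cycle V E n" and v: "v \<in> V"
  shows "degree E v = 2"
proof -
  obtain f where bij: "bij_betw f {0..<n} V" and E: "E = {{f i, f ((i + 1) mod n)} | i. i < n}"
    using cyc unfolding is_cycle_def by blast
  have inj: "inj_on f {0..<n}" using bij bij_betw_def by blast
  obtain k where k: "k < n" "v = f k" using bij v unfolding bij_betw_def by auto
  define p where "p = (k+n-1) mod n"
  define q where "q = (k+1) mod n"
  have pq: "p < n" "q < n" "(p+1) mod n = k" "q \<noteq> p" "q \<noteq> k" "p \<noteq> k"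
    using modfacts[OF n3 k(1) k(1)] n3 k unfolding p_def q_def by auto
  have fne: "f q \<noteq> f p" "f q \<noteq> f k" "f p \<noteq> f k"
    using pq k inj by (auto dest: inj_onD)
  have "{e\<in>E. v \<in> e} = {{f k, f q}, {f p, f k}}"
  proof (rule set_eqI, rule iffI)
    fix e assume "e \<in> {e\<in>E. v \<in> e}"
    then obtain i where i: "i < n" "e = {f i, f ((i + 1) mod n)}" "f k \<in> e" using E k by auto
    have "(i+1) mod n < n" using n3 by simp
    then have "i = k \<or> (i+1) mod n = k" using i k inj by (auto dest: inj_onD)
    moreover have "(i+1) mod n = k \<Longrightarrow> i = p" using modfacts[OF n3 k(1) i(1)] p_def by auto
    ultimately show "e \<in> {{f k, f q}, {f p, f k}}" using i q_def pq by auto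
  next
    fix e assume "e \<in> {{f k, f q}, {f p, f k}}"
    then show "e \<in> {e\<in>E. v \<in> e}" using E k pq q_def by auto
  qed
  moreover have "{f k, f q} \<noteq> {f p, f k}" using fne by (auto simp: doubleton_eq_iff)
  ultimately show ?thesis unfolding degree_def by (metis card_2_iff)
qed



lemma handshake:
  assumes sg: "simple_graph V E"
  shows "(\<Sum>v\<in>V. degree E v) = 2 * card E"
proof -
  have fV: "finite V" using sg simple_graph_def by auto
  have fE: "finite E" using sg unfolding simple_graph_def
    by (meson Pow_iff finite_Pow_iff rev_finite_subset subsetI)
  have "(\<Sum>v\<in>V. degree E v) = (\<Sum>v\<in>V. \<Sum>e\<in>E. if v \<in> e then 1 else 0)"
    unfolding degree_def using fE by (simp add: sum.If_cases Int_def)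
  also have "\<dots> = (\<Sum>e\<in>E. \<Sum>v\<in>V. if v \<in> e then 1 else 0)" by (rule sum.swap)
  also have "\<dots> = (\<Sum>e\<in>E. card (V \<inter> e))" using fV by (simp add: sum.If_cases)
  also have "\<dots> = (\<Sum>e\<in>E. 2)"
    by (rule sum.cong) (use sg in \<open>auto simp: simple_graph_def Int_absorb1\<close>)
  finally show ?thesis by simp
qed

lemma gen:
  assumes sg: "simple_graph V E" and reg: "\<forall>v\<in>V. degree E v = 2"
    and pm: "perfect_matching (new_leaves V E) M" and Vne: "V \<noteq> {}"
  shows "simple_graph (dagger_vertices V E) (dagger_edges V E M) \<and> neutral (dagger_edges V E M)"
proof -
  define N where "N = card V"
  define L where "L = new_leaves V E"
  define D where "D = dagger_edges V E M"
  define E1 :: "('a + 'a \<times> nat) set set" where "E1 = (\<lambda>e. Inl ` e) ` E"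
  define P where "P = (\<lambda>(v,i). {Inl v, Inr (v,i)}) ` (V \<times> {..<2::nat})"
  have fV: "finite V" using sg simple_graph_def by auto
  have Esub: "\<And>e. e \<in> E \<Longrightarrow> e \<subseteq> V \<and> card e = 2" using sg simple_graph_def by auto
  have fE: "finite E" using sg unfolding simple_graph_def
    by (meson Pow_iff finite_Pow_iff rev_finite_subset subsetI)
  have N0: "N > 0" using fV Vne N_def by (simp add: card_gt_0_iff)
  have cE: "card E = N" using handshake[OF sg] reg N_def by simp
  have L_eq: "L = Inr ` (V \<times> {..<2})" unfolding L_def new_leaves_def using reg by auto
  have cL: "card L = 2 * N" unfolding L_eq N_def
    by (subst card_image) (auto simp: card_cartesian_product)
  have fL: "finite L" using L_eq fV by simp
  have Msub: "\<And>e. e \<in> M \<Longrightarrow> e \<subseteq> L \<and> card e = 2" using pm unfolding L_def perfect_matching_def by blast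
  have Muniq: "\<And>x. x \<in> L \<Longrightarrow> \<exists>!e. e \<in> M \<and> x \<in> e" using pm unfolding L_def perfect_matching_def by blast
  have D_eq: "D = E1 \<union> P \<union> M" unfolding D_def dagger_edges_def E1_def P_def using reg by auto
  have fM: "finite M"
    by (rule finite_subset[of _ "Pow L"]) (use Msub fL in auto)
  have fE1: "finite E1" using fE E1_def by simp
  have fP: "finite P" using fV P_def by simp
  have cE1: "card E1 = N" unfolding E1_def
    by (subst card_image) (auto simp: inj_on_def inj_image_eq_iff cE)
  have cP: "card P = 2 * N" unfolding P_def N_def
    by (subst card_image) (auto simp: inj_on_def doubleton_eq_iff card_cartesian_product)
  have UM: "\<Union>M = L" using Msub Muniq by blast
  have "card (\<Union>M) = sum card M"
  proof (rule card_Union_disjoint)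
    show "pairwise disjnt M" unfolding pairwise_def disjnt_def
    proof (intro ballI impI)
      fix a b assume ab: "a \<in> M" "b \<in> M" "a \<noteq> b"
      show "a \<inter> b = {}"
      proof (rule ccontr)
        assume "a \<inter> b \<noteq> {}"
        then obtain x where "x \<in> a" "x \<in> b" by blast
        moreover have "x \<in> L" using Msub ab `x \<in> a` by blast
        ultimately show False using Muniq ab by blast
      qed
    qed
    show "\<And>A. A \<in> M \<Longrightarrow> finite A" using Msub fL finite_subset by blast
  qed
  then have "2 * N = 2 * card M" using UM cL Msub by simp
  then have cM: "card M = N" by simp
  have d1: "E1 \<inter> P = {}" unfolding E1_def P_def by auto
  have d2: "(E1 \<union> P) \<inter> M = {}"
  proof -
    have "e \<notin> M" if "e \<in> E1 \<union> P" for e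
    proof
      assume eM: "e \<in> M"
      then have "e \<subseteq> L" "card e = 2" using Msub by auto
      moreover from that have "e \<subseteq> range Inl \<or> (\<exists>v. Inl v \<in> e)" unfolding E1_def P_def by auto
      ultimately show False using L_eq
        by (metis Inl_Inr_False card.empty imageE image_iff subset_empty subset_iff zero_neq_numeral Int_absorb1 Int_emptyI)
    qed
    then show ?thesis by blast
  qed
  have sumD: "\<And>(f :: ('a + 'a \<times> nat) set \<Rightarrow> real) (c1::real) (c2::real) (c3::real). (\<forall>e\<in>E1. f e = c1) \<Longrightarrow> (\<forall>e\<in>P. f e = c2) \<Longrightarrow>
      (\<forall>e\<in>M. f e = c3) \<Longrightarrow> sum f D = c1 * real N + c2 * (2 * real N) + c3 * real N"
  proof -
    fix f :: "('a + 'a \<times> nat) set \<Rightarrow> real" and c1 c2 c3 :: real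
    assume h: "\<forall>e\<in>E1. f e = c1" "\<forall>e\<in>P. f e = c2" "\<forall>e\<in>M. f e = c3"
    have q1: "sum f D = sum f (E1 \<union> P) + sum f M"
      unfolding D_eq by (rule sum.union_disjoint) (use fE1 fP fM d2 in auto)
    have q2: "sum f (E1 \<union> P) = sum f E1 + sum f P"
      by (rule sum.union_disjoint) (use fE1 fP d1 in auto)
    have "sum f E1 = c1 * N" "sum f P = c2 * (2*N)" "sum f M = c3 * N"
      using h cE1 cP cM by (simp_all add: mult.commute)
    then show "sum f D = c1 * real N + c2 * (2 * real N) + c3 * real N"
      using q1 q2 by simp
  qed
  have dInl: "degree D (Inl v) = 4" if v: "v \<in> V" for v
  proof -
    have "{e\<in>D. Inl v \<in> e} = (\<lambda>e. Inl ` e) ` {e\<in>E. v \<in> e} \<union> {{Inl v, Inr (v,0)}, {Inl v, Inr (v,1)}}"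
    proof -
      have "Inl v \<notin> L" using L_eq by auto
      then have "e \<in> M \<Longrightarrow> Inl v \<notin> e" for e using Msub by blast
      then show ?thesis unfolding D_eq E1_def P_def using v by (auto simp: less_2_cases_iff)
    qed
    moreover have "card ((\<lambda>e. Inl ` e) ` {e\<in>E. v \<in> e}) = 2"
      using reg v by (subst card_image) (auto simp: inj_on_def inj_image_eq_iff degree_def)
    moreover have "card {{Inl v, Inr (v,0::nat)}, {Inl v, Inr (v,1)}} = 2"
      by (simp add: doubleton_eq_iff)
    moreover have "(\<lambda>e. Inl ` e) ` {e\<in>E. v \<in> e} \<inter> {{Inl v, Inr (v,0)}, {Inl v, Inr (v,1)}} = {}" by auto
    moreover have "finite ((\<lambda>e. Inl ` e) ` {e\<in>E. v \<in> e})" using fE by simp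
    ultimately show ?thesis unfolding degree_def
      by (metis (no_types, lifting) card_Un_disjoint finite.emptyI finite.insertI numeral_Bit0)
  qed
  have dInr: "degree D (Inr (v,i)) = 2" if v: "v \<in> V" "i < 2" for v i
  proof -
    have xL: "Inr (v,i) \<in> L" using L_eq v by auto
    then obtain e0 where e0: "e0 \<in> M" "Inr (v,i) \<in> e0" "\<And>e. e \<in> M \<Longrightarrow> Inr (v,i) \<in> e \<Longrightarrow> e = e0"
      using Muniq by metis
    have "Inl v \<notin> e0" using e0 Msub L_eq by blast
    have "{e\<in>D. Inr (v,i) \<in> e} = {{Inl v, Inr (v,i)}, e0}"
    proof (rule set_eqI, rule iffI)
      fix e assume "e \<in> {e\<in>D. Inr (v,i) \<in> e}"
      then have e: "e \<in> E1 \<union> P \<union> M" "Inr (v,i) \<in> e" using D_eq by auto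
      have "e \<notin> E1" using e(2) unfolding E1_def by auto
      moreover have "e \<in> P \<Longrightarrow> e = {Inl v, Inr (v,i)}" using e(2) unfolding P_def by auto
      moreover have "e \<in> M \<Longrightarrow> e = e0" using e0(3) e(2) by blast
      ultimately show "e \<in> {{Inl v, Inr (v,i)}, e0}" using e(1) by blast
    next
      fix e assume "e \<in> {{Inl v, Inr (v,i)}, e0}"
      moreover have "{Inl v, Inr (v,i)} \<in> P" unfolding P_def using v by auto
      ultimately show "e \<in> {e\<in>D. Inr (v,i) \<in> e}" using D_eq e0(1,2) by auto
    qed
    moreover have "{Inl v, Inr (v,i)} \<noteq> e0" using `Inl v \<notin> e0` by auto
    ultimately show ?thesis unfolding degree_def by simp
  qed
  have vE1: "(\<Prod>x\<in>e. real (degree D x)) = 16 \<and> (1/2) * (\<Sum>x\<in>e. real (degree D x)) = 4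
      \<and> (1/2) * (\<Sum>x\<in>e. (real (degree D x))^2) = 16" if eX: "e \<in> E1" for e
  proof -
    obtain e' where e': "e' \<in> E" "e = Inl ` e'" using eX E1_def by auto
    then obtain a b where ab: "e' = {a,b}" "a \<noteq> b" using Esub by (meson card_2_iff)
    have "a \<in> V" "b \<in> V" using Esub e' ab by auto
    then show ?thesis using e' ab dInl by simp
  qed
  have vP: "(\<Prod>x\<in>e. real (degree D x)) = 8 \<and> (1/2) * (\<Sum>x\<in>e. real (degree D x)) = 3
      \<and> (1/2) * (\<Sum>x\<in>e. (real (degree D x))^2) = 10" if eX: "e \<in> P" for e
  proof -
    obtain v i where vi: "v \<in> V" "i < 2" "e = {Inl v, Inr (v,i)}" using eX P_def by auto
    then show ?thesis using dInl dInr by simp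
  qed
  have vM: "(\<Prod>x\<in>e. real (degree D x)) = 4 \<and> (1/2) * (\<Sum>x\<in>e. real (degree D x)) = 2
      \<and> (1/2) * (\<Sum>x\<in>e. (real (degree D x))^2) = 4" if eX: "e \<in> M" for e
  proof -
    obtain a b where ab: "e = {a,b}" "a \<noteq> b" using Msub eX by (meson card_2_iff)
    have "a \<in> L" "b \<in> L" using Msub eX ab by auto
    then obtain v i w j where "a = Inr (v,i)" "v \<in> V" "i < 2" "b = Inr (w,j)" "w \<in> V" "j < 2"
      using L_eq by auto
    then show ?thesis using ab dInr by simp
  qed
  have S1: "(\<Sum>e\<in>D. \<Prod>x\<in>e. real (degree D x)) = 16 * real N + 8 * (2 * real N) + 4 * real N"
    by (rule sumD) (use vE1 vP vM in auto)
  have S2: "(\<Sum>e\<in>D. (1/2) * (\<Sum>x\<in>e. real (degree D x))) = 4 * real N + 3 * (2 * real N) + 2 * real N"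
    by (rule sumD) (use vE1 vP vM in auto)
  have S3: "(\<Sum>e\<in>D. (1/2) * (\<Sum>x\<in>e. (real (degree D x))^2)) = 16 * real N + 10 * (2 * real N) + 4 * real N"
    by (rule sumD) (use vE1 vP vM in auto)
  have cD: "card D = 4 * N" unfolding D_eq using fE1 fP fM d1 d2 cE1 cP cM
    by (simp add: card_Un_disjoint)
  have num: "assort_num D = 0" unfolding assort_num_def Let_def S1 S2 cD using N0
    by (simp add: field_simps power2_eq_square)
  have den: "assort_den D = 1" unfolding assort_den_def Let_def S3 S2 cD using N0
    by (simp add: field_simps power2_eq_square)
  have neu: "neutral D" unfolding neutral_def assortativity_def num den using cD N0 by simp
  have sgD: "simple_graph (dagger_vertices V E) D"
    unfolding simple_graph_def
  proof (rule conjI)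
    show "finite (dagger_vertices V E)" unfolding dagger_vertices_def using fV fL L_def by simp
  next
    show "\<forall>e\<in>D. e \<subseteq> dagger_vertices V E \<and> card e = 2"
    proof
    fix e assume "e \<in> D"
    then consider "e \<in> E1" | "e \<in> P" | "e \<in> M" using D_eq by blast
    then show "e \<subseteq> dagger_vertices V E \<and> card e = 2"
    proof cases
      case 1
      then obtain e' where e': "e' \<in> E" "e = Inl ` e'" using E1_def by auto
      then have "card e = 2" using Esub by (simp add: card_image)
      then show ?thesis using e' Esub unfolding dagger_vertices_def by auto
    next
      case 2
      then show ?thesis unfolding dagger_vertices_def P_def L_def[symmetric] L_eq by auto
    next
      case 3
      then show ?thesis using Msub unfolding dagger_vertices_def L_def by auto
    qed
    qed
  qed
  show ?thesis using sgD neu D_def by simp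
qed


theorem lemma5:
  fixes V :: "'a set" and E :: "'a set set" and n :: nat
    and M :: "('a + 'a \<times> nat) set set"
  assumes "n \<ge> 3"
    and "is_cycle V E n"
    and "perfect_matching (new_leaves V E) M"
  shows "simple_graph (dagger_vertices V E) (dagger_edges V E M)
         \<and> neutral (dagger_edges V E M)"
proof (rule gen)
  show "simple_graph V E" using assms(2) is_cycle_def by blast
  show "\<forall>v\<in>V. degree E v = 2" using cycle_deg[OF assms(1,2)] by blast
  show "perfect_matching (new_leaves V E) M" by (rule assms(3))
  show "V \<noteq> {}" using assms(1,2) unfolding is_cycle_def by auto
qed

end
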